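(* Let $M,N$ be equivalent canonical dtlas such that $M$ is a dtpla and $N$ is a dtop, and let $\varphi$ be the aheadness mapping from $N$ to $M$. Then (1) $A_N\Phi=\sqcap\{A_M(p)\Omega\mid p\in P_M\}$, and (2) for every $v\in\mathbb N_+^*$, $q\in Q_N$ and $p\in P_M$: if $A_N/v=q(x_0)$ then $\varphi(q,p)=A_M(p)\Omega/v$.
   Context: Trees and patterns. $T_\Delta(Z)$ is the set of trees over ranked alphabet $\Delta$ with extra nullary symbols $Z$; $t/v$ is the subtree at node $v\in\mathbb N_+^*$; $\bot$ is a special nullary symbol. $\sqcap T$ is the greatest lower bound of a finite nonempty set $T$ of trees w.r.t. the order $t\sqsubseteq t'$ ($t'$ obtained from $t$ by replacing occurrences of $\bot$ by trees): the largest common prefix with $\bot$ at the highest nodes of disagreement. A $\Sigma$-context is $C\in T_\Sigma(\{\bot\})$ with exactly one $\bot$; $\mathcal C_\Sigma$ is their set. $Q(Y)=\{q(y)\mid q\in Q,y\in Y\}$, $X=\{x_0,x_1,\dots\}$, $X_k=\{x_1,\dots,x_k\}$. Dtlas. A dtla $M$ from $\Sigma$ to $\Delta$ consists of a finite set $Q_M$ of states, a total deterministic bottom-up tree automaton with finite state set $P_M$ and transitions $\delta(a,p_1,\dots,p_k)$, extended to $\delta_M:T_\Sigma\to P_M$ ($[\![p]\!]_M=\delta_M^{-1}(p)$), axioms $A_M(p)\in T_\Delta(Q_M(\{x_0\}))$, and at most one rule $q(a(x_1\langle p_1\rangle,\dots,x_k\langle p_k\rangle))\to\mathrm{rhs}_M(q,a,p_1,\dots,p_k)\in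 T_\Delta(Q_M(X_k))$ per $q,a,p_1,\dots,p_k$. Semantics: $q_M(a(s_1,\dots,s_k))=\mathrm{rhs}_M(q,a,\delta_M(s_1),\dots,\delta_M(s_k))[q'(x_i)\leftarrow q'_M(s_i)]$, $M(s)=A_M(\delta_M(s))[q(x_0)\leftarrow q_M(s)]$; equivalent means equal translations. A dtop is a dtla with a single look-ahead state $\bot$; for a dtop $N$ its unique axiom is $A_N\in T_\Delta(Q_N(\{x_0\}))$. A dtpla has $|P_M|\ge2$. $M(C[p])\in T_\Delta(Q_M\times P_M)$ is the output on $C\in\mathcal C_\Sigma$ with the hole treated as a leaf of look-ahead state $p$ and $q_M(p)=\langle q,p\rangle$; $N(C)=N(C[\bot])$. A state $q$ is reachable if $\langle q,p\rangle$ labels a node of $M(C[p])$ for some $C,p$. $M$ is la-uniform if there is $\rho_M:Q_M\to P_M$ with domain of $[\![q]\!]_M$ equal to $[\![\rho_M(q)]\!]_M$, every $q(x_0)$ in $A_M(p)$ having $\rho_M(q)=p$, every $q'(x_i)$ in $\mathrm{rhs}_M(q,a,p_1,\dots,p_k)$ having $\rho_M(q')=p_i$, and the rule for $q,a,p_1,\dots,p_k$ existing iff $\delta(a,p_1,\dots,p_k)=\rho_M(q)$ (for a dtop, $\rho(q)=\bot$). Earliest: no state $q$ and $d\in\Delta$ such that $q(s)$ has root label $d$ for all $s$ in the domain of $[\![q]\!]$. Canonical: total, la-uniform, earliest, all states reachable, distinct states have distinct translations. For $t\in T_\Delta(Q(X))$ of an la-uniform dtla, $t\Omega$ replaces every $q(x_i)$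 by the leaf $\langle q,\rho(q)\rangle$ (for a dtop, by $\langle q,\bot\rangle$). For $t\in T_\Delta(Q_N(X))$, $t\Phi$ replaces every $q(x_i)$ by $\bot$. Aheadness mapping: the unique $\varphi:Q_N\times P_M\to T_\Delta(Q_M\times P_M)$ with $M(C[p])=N(C)[\langle q,\bot\rangle\leftarrow\varphi(q,p)\mid q\in Q_N]$ for all $C\in\mathcal C_\Sigma$, $p\in P_M$. *)

theory Defs
  imports Main
begin

text \<open>Trees over a ranked alphabet with extra nullary symbols: Bot is the special
nullary symbol \<bottom>, Leaf z is an extra nullary symbol z \<in> Z, Sym f ts is a node
labelled f with children ts.\<close>

datatype ('f, 'z) tm = Bot | Leaf 'z | Sym 'f "('f, 'z) tm list"

text \<open>Well-formedness: t \<in> T_F(Z) (b = False) or t \<in> T_F(Z \<union> {\<bottom>}) (b = True),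
for a ranked alphabet given by a symbol set F and a rank function r.\<close>
fun wf :: "'f set \<Rightarrow> ('f \<Rightarrow> nat) \<Rightarrow> 'z set \<Rightarrow> bool \<Rightarrow> ('f, 'z) tm \<Rightarrow> bool" where
  "wf F r Z b Bot = b"
| "wf F r Z b (Leaf z) = (z \<in> Z)"
| "wf F r Z b (Sym f ts) = (f \<in> F \<and> length ts = r f \<and> (\<forall>t\<in>set ts. wf F r Z b t))"

fun leaves :: "('f, 'z) tm \<Rightarrow> 'z set" where
  "leaves Bot = {}"
| "leaves (Leaf z) = {z}"
| "leaves (Sym f ts) = \<Union> (leaves ` set ts)"

fun nbot :: "('f, 'z) tm \<Rightarrow> nat" where
  "nbot Bot = 1"
| "nbot (Leaf z) = 0"
| "nbot (Sym f ts) = sum_list (map nbot ts)"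

fun subst :: "('z \<Rightarrow> ('f, 'w) tm) \<Rightarrow> ('f, 'z) tm \<Rightarrow> ('f, 'w) tm" where
  "subst \<sigma> Bot = Bot"
| "subst \<sigma> (Leaf z) = \<sigma> z"
| "subst \<sigma> (Sym f ts) = Sym f (map (subst \<sigma>) ts)"

text \<open>C[p]: replace the hole \<bottom> of a context C by a leaf p (contexts have no
extra leaves, so the Leaf case is irrelevant).\<close>
fun plug :: "('f, 'y) tm \<Rightarrow> 'z \<Rightarrow> ('f, 'z) tm" where
  "plug Bot p = Leaf p"
| "plug (Leaf y) p = Bot"
| "plug (Sym f ts) p = Sym f (map (\<lambda>t. plug t p) ts)"

fun subt :: "('f, 'z) tm \<Rightarrow> nat list \<Rightarrow> ('f, 'z) tm option" where
  "subt t [] = Some t"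
| "subt (Sym f ts) (i # v) = (if 1 \<le> i \<and> i \<le> length ts then subt (ts ! (i - 1)) v else None)"
| "subt Bot (i # v) = None"
| "subt (Leaf z) (i # v) = None"

inductive below :: "('f, 'z) tm \<Rightarrow> ('f, 'z) tm \<Rightarrow> bool" where
  "below Bot t"
| "below (Leaf z) (Leaf z)"
| "list_all2 below ts us \<Longrightarrow> below (Sym f ts) (Sym f us)"

definition glb :: "('f, 'z) tm set \<Rightarrow> ('f, 'z) tm" where
  "glb T = (THE g. (\<forall>t\<in>T. below g t) \<and> (\<forall>g'. (\<forall>t\<in>T. below g' t) \<longrightarrow> below g' g))"

text \<open>A leaf (q, i) in an axiom / right-hand side stands for q(x_i).
rhs M q a ps = None means that there is no rule for q, a, ps.\<close>
record ('q, 'p, 'a, 'd) dtla =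
  Q :: "'q set"
  P :: "'p set"
  del :: "'a \<Rightarrow> 'p list \<Rightarrow> 'p"
  Ax :: "'p \<Rightarrow> ('d, 'q \<times> nat) tm"
  rhs :: "'q \<Rightarrow> 'a \<Rightarrow> 'p list \<Rightarrow> ('d, 'q \<times> nat) tm option"

definition is_dtla :: "'a set \<Rightarrow> ('a \<Rightarrow> nat) \<Rightarrow> 'd set \<Rightarrow> ('d \<Rightarrow> nat)
    \<Rightarrow> ('q, 'p, 'a, 'd) dtla \<Rightarrow> bool" where
  "is_dtla Sig rkS Dl rkD M \<longleftrightarrow>
     finite (Q M) \<and> finite (P M) \<and> P M \<noteq> {} \<and>
     (\<forall>a\<in>Sig. \<forall>ps. length ps = rkS a \<and> set ps \<subseteq> P M \<longrightarrow> del M a ps \<in> P M) \<and>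
     (\<forall>p\<in>P M. wf Dl rkD (Q M \<times> {0}) False (Ax M p)) \<and>
     (\<forall>q\<in>Q M. \<forall>a\<in>Sig. \<forall>ps r. length ps = rkS a \<and> set ps \<subseteq> P M \<and> rhs M q a ps = Some r
        \<longrightarrow> wf Dl rkD (Q M \<times> {1..rkS a}) False r)"

text \<open>Look-ahead state of an input tree whose leaves (holes) h carry look-ahead
state \<eta> h.\<close>
fun deltaE :: "('q, 'p, 'a, 'd) dtla \<Rightarrow> ('h \<Rightarrow> 'p) \<Rightarrow> ('a, 'h) tm \<Rightarrow> 'p" where
  "deltaE M \<eta> Bot = undefined"
| "deltaE M \<eta> (Leaf h) = \<eta> h"
| "deltaE M \<eta> (Sym a ss) = del M a (map (deltaE M \<eta>) ss)"

text \<open>Semantics (relational): qsem M \<eta> hol q s t means q_M(s) = t, where a hole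
leaf h of s is translated by state q into hol q h.\<close>
inductive qsem :: "('q, 'p, 'a, 'd) dtla \<Rightarrow> ('h \<Rightarrow> 'p) \<Rightarrow> ('q \<Rightarrow> 'h \<Rightarrow> ('d, 'w) tm)
    \<Rightarrow> 'q \<Rightarrow> ('a, 'h) tm \<Rightarrow> ('d, 'w) tm \<Rightarrow> bool"
  for M \<eta> hol where
  leaf: "qsem M \<eta> hol q (Leaf h) (hol q h)"
| node: "rhs M q a (map (deltaE M \<eta>) ss) = Some r \<Longrightarrow>
    \<forall>z\<in>leaves r. 1 \<le> snd z \<and> snd z \<le> length ss \<and> qsem M \<eta> hol (fst z) (ss ! (snd z - 1)) (\<sigma> z) \<Longrightarrow>
    qsem M \<eta> hol q (Sym a ss) (subst \<sigma> r)"

definition msem :: "('q, 'p, 'a, 'd) dtla \<Rightarrow> ('h \<Rightarrow> 'p) \<Rightarrow> ('q \<Rightarrow> 'h \<Rightarrow> ('d, 'w) tm)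
    \<Rightarrow> ('a, 'h) tm \<Rightarrow> ('d, 'w) tm \<Rightarrow> bool" where
  "msem M \<eta> hol s t \<longleftrightarrow> (\<exists>\<sigma>. (\<forall>z\<in>leaves (Ax M (deltaE M \<eta> s)). qsem M \<eta> hol (fst z) s (\<sigma> z))
      \<and> t = subst \<sigma> (Ax M (deltaE M \<eta> s)))"

definition the_opt :: "('b \<Rightarrow> bool) \<Rightarrow> 'b option" where
  "the_opt R = (if \<exists>t. R t then Some (THE t. R t) else None)"

text \<open>Ground input trees T_\<Sigma> (represented in type ('a, unit) tm, no holes) and
ground outputs in T_\<Delta> (type ('d, unit) tm).\<close>
definition GT :: "'a set \<Rightarrow> ('a \<Rightarrow> nat) \<Rightarrow> ('a, unit) tm set" where
  "GT Sig rk = {s. wf Sig rk {} False s}"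

definition Ctx :: "'a set \<Rightarrow> ('a \<Rightarrow> nat) \<Rightarrow> ('a, unit) tm set" where
  "Ctx Sig rk = {C. wf Sig rk {} True C \<and> nbot C = 1}"

definition gdelta :: "('q, 'p, 'a, 'd) dtla \<Rightarrow> ('a, unit) tm \<Rightarrow> 'p" where
  "gdelta M s = deltaE M (\<lambda>_. undefined) s"

definition gq :: "('q, 'p, 'a, 'd) dtla \<Rightarrow> 'q \<Rightarrow> ('a, unit) tm \<Rightarrow> ('d, unit) tm option" where
  "gq M q s = the_opt (qsem M (\<lambda>_. undefined) (\<lambda>_ _. Bot) q s)"

definition gM :: "('q, 'p, 'a, 'd) dtla \<Rightarrow> ('a, unit) tm \<Rightarrow> ('d, unit) tm option" where
  "gM M s = the_opt (msem M (\<lambda>_. undefined) (\<lambda>_ _. Bot) s)"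

text \<open>M(C[p]) \<in> T_\<Delta>(Q_M \<times> P_M): the hole leaf p is translated by q into \<langle>q,p\<rangle>.\<close>
definition MC :: "('q, 'p, 'a, 'd) dtla \<Rightarrow> ('a, 'p) tm \<Rightarrow> ('d, 'q \<times> 'p) tm option" where
  "MC M s = the_opt (msem M id (\<lambda>q p. Leaf (q, p)) s)"

definition la_uniform_wrt :: "'a set \<Rightarrow> ('a \<Rightarrow> nat) \<Rightarrow> ('q, 'p, 'a, 'd) dtla \<Rightarrow> ('q \<Rightarrow> 'p) \<Rightarrow> bool" where
  "la_uniform_wrt Sig rk M \<rho> \<longleftrightarrow>
     (\<forall>q\<in>Q M. \<rho> q \<in> P M) \<and>
     (\<forall>q\<in>Q M. {s \<in> GT Sig rk. gq M q s \<noteq> None} = {s \<in> GT Sig rk. gdelta M s = \<rho> q}) \<and>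
     (\<forall>p\<in>P M. \<forall>z\<in>leaves (Ax M p). \<rho> (fst z) = p) \<and>
     (\<forall>q\<in>Q M. \<forall>a\<in>Sig. \<forall>ps r. length ps = rk a \<and> set ps \<subseteq> P M \<and> rhs M q a ps = Some r
        \<longrightarrow> (\<forall>z\<in>leaves r. \<rho> (fst z) = ps ! (snd z - 1))) \<and>
     (\<forall>q\<in>Q M. \<forall>a\<in>Sig. \<forall>ps. length ps = rk a \<and> set ps \<subseteq> P M
        \<longrightarrow> (rhs M q a ps \<noteq> None \<longleftrightarrow> del M a ps = \<rho> q))"

definition la_uniform :: "'a set \<Rightarrow> ('a \<Rightarrow> nat) \<Rightarrow> ('q, 'p, 'a, 'd) dtla \<Rightarrow> bool" where
  "la_uniform Sig rk M \<longleftrightarrow> (\<exists>\<rho>. la_uniform_wrt Sig rk M \<rho>)"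

definition total :: "'a set \<Rightarrow> ('a \<Rightarrow> nat) \<Rightarrow> ('q, 'p, 'a, 'd) dtla \<Rightarrow> bool" where
  "total Sig rk M \<longleftrightarrow> (\<forall>s\<in>GT Sig rk. gM M s \<noteq> None)"

definition earliest :: "'a set \<Rightarrow> ('a \<Rightarrow> nat) \<Rightarrow> 'd set \<Rightarrow> ('q, 'p, 'a, 'd) dtla \<Rightarrow> bool" where
  "earliest Sig rk Dl M \<longleftrightarrow>
     \<not> (\<exists>q\<in>Q M. \<exists>d\<in>Dl. \<forall>s\<in>GT Sig rk. gq M q s \<noteq> None \<longrightarrow> (\<exists>us. gq M q s = Some (Sym d us)))"

definition reachable :: "'a set \<Rightarrow> ('a \<Rightarrow> nat) \<Rightarrow> ('q, 'p, 'a, 'd) dtla \<Rightarrow> 'q \<Rightarrow> bool" where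
  "reachable Sig rk M q \<longleftrightarrow>
     (\<exists>C\<in>Ctx Sig rk. \<exists>p\<in>P M. \<exists>t. MC M (plug C p) = Some t \<and> (q, p) \<in> leaves t)"

definition canonical :: "'a set \<Rightarrow> ('a \<Rightarrow> nat) \<Rightarrow> 'd set \<Rightarrow> ('d \<Rightarrow> nat)
    \<Rightarrow> ('q, 'p, 'a, 'd) dtla \<Rightarrow> bool" where
  "canonical Sig rkS Dl rkD M \<longleftrightarrow>
     is_dtla Sig rkS Dl rkD M \<and> total Sig rkS M \<and> la_uniform Sig rkS M \<and> earliest Sig rkS Dl M \<and>
     (\<forall>q\<in>Q M. reachable Sig rkS M q) \<and>
     (\<forall>q\<in>Q M. \<forall>q'\<in>Q M. q \<noteq> q' \<longrightarrow> (\<exists>s\<in>GT Sig rkS. gq M q s \<noteq> gq M q' s))"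

definition equivalent :: "'a set \<Rightarrow> ('a \<Rightarrow> nat) \<Rightarrow> ('q, 'p, 'a, 'd) dtla \<Rightarrow> ('q2, 'p2, 'a, 'd) dtla \<Rightarrow> bool" where
  "equivalent Sig rk M N \<longleftrightarrow> (\<forall>s\<in>GT Sig rk. gM M s = gM N s)"

text \<open>A dtop: single look-ahead state \<bottom>, represented by () :: unit.\<close>
definition is_dtop :: "('q, unit, 'a, 'd) dtla \<Rightarrow> bool" where
  "is_dtop N \<longleftrightarrow> P N = {()}"

definition is_dtpla :: "('q, 'p, 'a, 'd) dtla \<Rightarrow> bool" where
  "is_dtpla M \<longleftrightarrow> card (P M) \<ge> 2"

definition Omega :: "('q \<Rightarrow> 'p) \<Rightarrow> ('d, 'q \<times> nat) tm \<Rightarrow> ('d, 'q \<times> 'p) tm" where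
  "Omega \<rho> t = subst (\<lambda>z. Leaf (fst z, \<rho> (fst z))) t"

definition Phi :: "('d, 'q \<times> nat) tm \<Rightarrow> ('d, 'w) tm" where
  "Phi t = subst (\<lambda>_. Bot) t"

text \<open>\<phi> satisfies the defining property of the aheadness mapping from N to M:
M(C[p]) = N(C)[\<langle>q,\<bottom>\<rangle> \<leftarrow> \<phi>(q,p) | q \<in> Q_N] for all contexts C and p \<in> P_M.\<close>
definition is_aheadness :: "'a set \<Rightarrow> ('a \<Rightarrow> nat) \<Rightarrow> ('qM, 'p, 'a, 'd) dtla \<Rightarrow> ('qN, unit, 'a, 'd) dtla
    \<Rightarrow> ('qN \<Rightarrow> 'p \<Rightarrow> ('d, 'qM \<times> 'p) tm) \<Rightarrow> bool" where
  "is_aheadness Sig rk M N \<phi> \<longleftrightarrow>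
     (\<forall>C\<in>Ctx Sig rk. \<forall>p\<in>P M.
        MC M (plug C p) = map_option (subst (\<lambda>z. \<phi> (fst z) p)) (MC N (plug C ())))"

end

theory Submission
  imports Defs
begin

lemma below_refl: "below t t"
proof (induction t)
  case (Sym f ts) thus ?case by (auto intro!: below.intros simp: list_all2_same)
qed (auto intro: below.intros)

lemma below_Bot_iff: "below g Bot \<longleftrightarrow> g = Bot"
  by (auto elim: below.cases intro: below.intros)

lemma below_antisym: "below a b \<Longrightarrow> below b a \<Longrightarrow> a = b"
proof (induction rule: below.induct)
  case (1 t) thus ?case by (simp add: below_Bot_iff)
next
  case (2 z) thus ?case by simp
next
  case (3 ts us f)
  from 3(2) have "list_all2 below us ts" by (auto elim: below.cases)
  with 3(1) have "ts = us"
    by (auto simp: list_all2_conv_all_nth intro: nth_equalityI)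
  thus ?case by simp
qed

lemma glb_eqI:
  assumes "\<forall>t\<in>T. below g t" and "\<forall>g'. (\<forall>t\<in>T. below g' t) \<longrightarrow> below g' g"
  shows "glb T = g"
  unfolding glb_def
proof (rule the_equality)
  show "(\<forall>t\<in>T. below g t) \<and> (\<forall>g'. (\<forall>t\<in>T. below g' t) \<longrightarrow> below g' g)" using assms by blast
next
  fix g2 assume h: "(\<forall>t\<in>T. below g2 t) \<and> (\<forall>g'. (\<forall>t\<in>T. below g' t) \<longrightarrow> below g' g2)"
  hence "below g2 g" using assms by blast
  moreover have "below g g2" using h assms by blast
  ultimately show "g2 = g" by (rule below_antisym)
qed

lemma subst_subst: "subst \<sigma> (subst \<tau> t) = subst (\<lambda>z. subst \<sigma> (\<tau> z)) t"
  by (induction t) auto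

lemma subst_cong: "(\<forall>z\<in>leaves t. \<sigma> z = \<tau> z) \<Longrightarrow> subst \<sigma> t = subst \<tau> t"
  by (induction t) auto

lemma subst_leaf_eq: "subst \<sigma> t = subst \<tau> t \<Longrightarrow> z \<in> leaves t \<Longrightarrow> \<sigma> z = \<tau> z"
  by (induction t) auto

lemma subt_subst: "subt t v = Some (Leaf z) \<Longrightarrow> subt (subst \<sigma> t) v = Some (\<sigma> z)"
proof (induction v arbitrary: t)
  case Nil thus ?case by simp
next
  case (Cons i v) thus ?case by (cases t) (auto split: if_splits)
qed

lemma leaves_subst: "leaves (subst \<sigma> t) = (\<Union>z\<in>leaves t. leaves (\<sigma> z))"
  by (induction t) auto

lemma wf_subst_leaf: "wf F r Z b (subst \<sigma> t) \<Longrightarrow> z \<in> leaves t \<Longrightarrow> wf F r Z b (\<sigma> z)"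
  by (induction t) auto

lemma wf_subst: "wf F r Z b t \<Longrightarrow> (\<forall>z\<in>leaves t. wf F r Z' b (\<sigma> z)) \<Longrightarrow> wf F r Z' b (subst \<sigma> t)"
  by (induction t) auto

lemma wf_leaves: "wf F r Z b t \<Longrightarrow> z \<in> leaves t \<Longrightarrow> z \<in> Z"
  by (induction t) auto

lemma below_subst_Bot: "below (subst (\<lambda>_. Bot) t) (subst \<sigma> t)"
proof (induction t)
  case (Sym f ts) thus ?case by (auto intro!: below.intros simp: list_all2_conv_all_nth)
qed (auto intro: below.intros below_refl)

lemma qsem_Leaf: "qsem X \<eta> hol q (Leaf h) t \<Longrightarrow> t = hol q h"
  by (auto elim: qsem.cases)

lemma qsem_det: "qsem X \<eta> hol q s t1 \<Longrightarrow> qsem X \<eta> hol q s t2 \<Longrightarrow> t1 = t2"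
proof (induction arbitrary: t2 rule: qsem.induct)
  case (leaf q h) thus ?case by (auto dest: qsem_Leaf)
next
  case (node q a ss r \<sigma>)
  note IH = node
  from IH(3) show ?case
  proof (cases rule: qsem.cases)
    case (node r' \<sigma>')
    hence "r' = r" using IH(1) by simp
    thus ?thesis using IH(2) node by (auto intro!: subst_cong)
  qed
qed

lemma msem_det: "msem X \<eta> hol s t1 \<Longrightarrow> msem X \<eta> hol s t2 \<Longrightarrow> t1 = t2"
  unfolding msem_def by (auto intro!: subst_cong dest: qsem_det)

lemma the_opt_SomeD: "the_opt R = Some t \<Longrightarrow> (\<And>a b. R a \<Longrightarrow> R b \<Longrightarrow> a = b) \<Longrightarrow> R t"
  unfolding the_opt_def by (auto split: if_splits intro: theI)

lemma the_opt_SomeI: "R t \<Longrightarrow> (\<And>a b. R a \<Longrightarrow> R b \<Longrightarrow> a = b) \<Longrightarrow> the_opt R = Some t"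
  unfolding the_opt_def by (auto intro: the_equality)

lemma MC_Leaf: "MC X (Leaf p) = Some (subst (\<lambda>z. Leaf (fst z, p)) (Ax X p))"
  unfolding MC_def
proof (rule the_opt_SomeI)
  show "msem X id (\<lambda>q p. Leaf (q, p)) (Leaf p) (subst (\<lambda>z. Leaf (fst z, p)) (Ax X p))"
    unfolding msem_def by (auto intro!: exI[of _ "\<lambda>z. Leaf (fst z, p)"] qsem.leaf)
qed (rule msem_det)

lemma deltaE_in: "is_dtla Sig rk Dl rkD X \<Longrightarrow> wf Sig rk {} False s \<Longrightarrow> deltaE X \<eta> s \<in> P X"
proof (induction s)
  case (Sym a ss)
  hence "set (map (deltaE X \<eta>) ss) \<subseteq> P X" by auto
  thus ?case using Sym.prems unfolding is_dtla_def by auto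
qed auto

lemma glb_core:
  assumes "PP \<noteq> {}"
    and "\<forall>z\<in>leaves t. (\<forall>w. \<exists>p\<in>PP. \<sigma> p z \<noteq> Leaf w) \<and> (\<forall>f. \<exists>p\<in>PP. \<forall>us. \<sigma> p z \<noteq> Sym f us)"
    and "\<forall>p\<in>PP. below g (subst (\<sigma> p) t)"
  shows "below g (subst (\<lambda>_. Bot) t)"
  using assms(2,3)
proof (induction t arbitrary: g)
  case Bot
  from assms(1) obtain p0 where "p0 \<in> PP" by auto
  with Bot show ?case by (auto simp: below_Bot_iff intro: below.intros)
next
  case (Leaf z)
  show ?case
  proof (cases g)
    case (Leaf w)
    from Leaf.prems(1) have "\<exists>p\<in>PP. \<sigma> p z \<noteq> Leaf w" by simp
    then obtain p where "p \<in> PP" "\<sigma> p z \<noteq> Leaf w" by blast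
    with Leaf.prems(2) \<open>g = Leaf w\<close> show ?thesis by (auto elim: below.cases)
  next
    case (Sym f gs)
    from Leaf.prems(1) have "\<exists>p\<in>PP. \<forall>us. \<sigma> p z \<noteq> Sym f us" by simp
    then obtain p where "p \<in> PP" "\<forall>us. \<sigma> p z \<noteq> Sym f us" by blast
    with Leaf.prems(2) \<open>g = Sym f gs\<close> show ?thesis by (auto elim: below.cases)
  qed (auto intro: below.intros)
next
  case (Sym f ts)
  from assms(1) obtain p0 where p0: "p0 \<in> PP" by auto
  show ?case
  proof (cases g)
    case (Leaf w)
    with Sym.prems(2) p0 show ?thesis by (auto elim: below.cases)
  next
    case (Sym f' gs)
    have h: "\<forall>p\<in>PP. f' = f \<and> list_all2 below gs (map (subst (\<sigma> p)) ts)"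
      using Sym.prems(2) \<open>g = Sym f' gs\<close> by (auto elim: below.cases)
    hence ff: "f' = f" and "list_all2 below gs (map (subst (\<sigma> p0)) ts)" using p0 by auto
    hence len: "length gs = length ts" by (auto dest: list_all2_lengthD)
    have "list_all2 below gs (map (subst (\<lambda>_. Bot)) ts)"
    proof (unfold list_all2_conv_all_nth, intro conjI allI impI)
      show "length gs = length (map (subst (\<lambda>_. Bot)) ts)" using len by simp
    next
      fix i assume "i < length gs"
      hence i: "i < length ts" using len by simp
      have "\<forall>p\<in>PP. below (gs ! i) (subst (\<sigma> p) (ts ! i))"
        using h i by (auto simp: list_all2_conv_all_nth)
      moreover have "\<forall>z\<in>leaves (ts ! i). (\<forall>w. \<exists>p\<in>PP. \<sigma> p z \<noteq> Leaf w) \<and> (\<forall>f. \<exists>p\<in>PP. \<forall>us. \<sigma> p z \<noteq> Sym f us)"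
      proof -
        have "leaves (ts ! i) \<subseteq> leaves (Sym f ts)" using nth_mem[OF i] by auto
        thus ?thesis using Sym.prems(1) by blast
      qed
      ultimately have "below (gs ! i) (subst (\<lambda>_. Bot) (ts ! i))"
        using Sym.IH[of "ts ! i"] i by auto
      thus "below (gs ! i) (map (subst (\<lambda>_. Bot)) ts ! i)" using i by simp
    qed
    thus ?thesis using \<open>g = Sym f' gs\<close> ff by (auto intro: below.intros)
  qed (auto intro: below.intros)
qed

theorem mainTheorem7:
  fixes Sig :: "'a set" and rkS :: "'a \<Rightarrow> nat" and Dl :: "'d set" and rkD :: "'d \<Rightarrow> nat"
    and M :: "('qM, 'p, 'a, 'd) dtla" and N :: "('qN, unit, 'a, 'd) dtla"
    and \<rho> :: "'qM \<Rightarrow> 'p" and \<phi> :: "'qN \<Rightarrow> 'p \<Rightarrow> ('d, 'qM \<times> 'p) tm"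
  assumes "finite Sig" and "finite Dl"
    and "canonical Sig rkS Dl rkD M" and "canonical Sig rkS Dl rkD N"
    and "is_dtpla M" and "is_dtop N"
    and "equivalent Sig rkS M N"
    and "la_uniform_wrt Sig rkS M \<rho>"
    and "is_aheadness Sig rkS M N \<phi>"
  shows "Phi (Ax N ()) = glb ((\<lambda>p. Omega \<rho> (Ax M p)) ` P M)
         \<and> (\<forall>v q p. q \<in> Q N \<longrightarrow> p \<in> P M \<longrightarrow> subt (Ax N ()) v = Some (Leaf (q, 0))
           \<longrightarrow> subt (Omega \<rho> (Ax M p)) v = Some (\<phi> q p))"
proof -
  let ?AN = "Ax N ()"
  have isM: "is_dtla Sig rkS Dl rkD M" and totM: "total Sig rkS M"
    using assms(3) unfolding canonical_def by auto
  have isN: "is_dtla Sig rkS Dl rkD N" and totN: "total Sig rkS N" and earN: "earliest Sig rkS Dl N"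
    using assms(4) unfolding canonical_def by auto
  have PN: "P N = {()}" using assms(6) unfolding is_dtop_def .
  have rho3: "\<forall>p\<in>P M. \<forall>z\<in>leaves (Ax M p). \<rho> (fst z) = p"
    using assms(8) unfolding la_uniform_wrt_def by blast
  have PMne: "P M \<noteq> {}" using isM unfolding is_dtla_def by blast
  have wfM: "\<forall>p\<in>P M. wf Dl rkD (Q M \<times> {0}) False (Ax M p)" using isM unfolding is_dtla_def by blast
  have wfN: "wf Dl rkD (Q N \<times> {0}) False ?AN" using isN PN unfolding is_dtla_def by blast
  have Om: "Omega \<rho> (Ax M p) = subst (\<lambda>z. \<phi> (fst z) p) ?AN" if p: "p \<in> P M" for p
  proof -
    have C: "(Bot :: ('a, unit) tm) \<in> Ctx Sig rkS" by (simp add: Ctx_def)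
    have "MC M (plug (Bot :: ('a, unit) tm) p) = map_option (subst (\<lambda>z. \<phi> (fst z) p)) (MC N (plug (Bot :: ('a, unit) tm) ()))"
      using assms(9) C p unfolding is_aheadness_def by blast
    hence "subst (\<lambda>z. Leaf (fst z, p)) (Ax M p) = subst (\<lambda>z. \<phi> (fst z) p) (subst (\<lambda>z. Leaf (fst z, ())) ?AN)"
      by (simp add: MC_Leaf)
    moreover have "Omega \<rho> (Ax M p) = subst (\<lambda>z. Leaf (fst z, p)) (Ax M p)"
      unfolding Omega_def using rho3 p by (auto intro!: subst_cong)
    ultimately show ?thesis by (simp add: subst_subst)
  qed
  have part2: "\<forall>v q p. q \<in> Q N \<longrightarrow> p \<in> P M \<longrightarrow> subt ?AN v = Some (Leaf (q, 0))
           \<longrightarrow> subt (Omega \<rho> (Ax M p)) v = Some (\<phi> q p)"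
  proof (intro allI impI)
    fix v q p assume "q \<in> Q N" "p \<in> P M" "subt ?AN v = Some (Leaf (q, 0))"
    thus "subt (Omega \<rho> (Ax M p)) v = Some (\<phi> q p)"
      using Om subt_subst[of ?AN v "(q, 0)" "\<lambda>z. \<phi> (fst z) p"] by simp
  qed
  have dis: "(\<forall>w. \<exists>p\<in>P M. \<phi> (fst z) p \<noteq> Leaf w) \<and> (\<forall>f. \<exists>p\<in>P M. \<forall>us. \<phi> (fst z) p \<noteq> Sym f us)"
    if z: "z \<in> leaves ?AN" for z
  proof -
    obtain q where zq: "z = (q, 0)" and qQ: "q \<in> Q N" using wf_leaves[OF wfN z] by auto
    have lv: "\<forall>w\<in>leaves (\<phi> q p). snd w = p" if p: "p \<in> P M" for p
    proof -
      have "leaves (\<phi> q p) \<subseteq> leaves (subst (\<lambda>z. \<phi> (fst z) p) ?AN)"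
        using z zq by (auto simp: leaves_subst)
      also have "\<dots> = leaves (Omega \<rho> (Ax M p))" using Om[OF p] by simp
      finally show ?thesis using rho3 p unfolding Omega_def by (auto simp: leaves_subst)
    qed
    have A: "\<forall>w. \<exists>p\<in>P M. \<phi> q p \<noteq> Leaf w"
    proof
      fix w
      obtain p1 p2 where p12: "p1 \<in> P M" "p2 \<in> P M" "p1 \<noteq> p2"
      proof -
        have fin: "finite (P M)" using isM unfolding is_dtla_def by blast
        have "\<not> card (P M) \<le> Suc 0" using assms(5) unfolding is_dtpla_def by simp
        hence "\<not> (\<forall>a\<in>P M. \<forall>b\<in>P M. a = b)" by (simp add: card_le_Suc0_iff_eq[OF fin])
        thus ?thesis using that by blast
      qed
      show "\<exists>p\<in>P M. \<phi> q p \<noteq> Leaf w"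
      proof (cases "\<phi> q p1 = Leaf w")
        case True
        hence "snd w = p1" using lv[OF p12(1)] by simp
        hence "\<phi> q p2 \<noteq> Leaf w" using lv[OF p12(2)] p12(3) by auto
        thus ?thesis using p12(2) by blast
      next
        case False thus ?thesis using p12(1) by blast
      qed
    qed
    have B: "\<exists>p\<in>P M. \<forall>us. \<phi> q p \<noteq> Sym f us" for f
    proof (rule ccontr)
      assume "\<not> ?thesis"
      hence allS: "\<forall>p\<in>P M. \<exists>us. \<phi> q p = Sym f us" by blast
      obtain p0 where p0: "p0 \<in> P M" using PMne by blast
      have "wf Dl rkD UNIV False (Omega \<rho> (Ax M p0))"
        unfolding Omega_def using wfM p0 by (auto intro!: wf_subst)
      hence "wf Dl rkD UNIV False (subst (\<lambda>z. \<phi> (fst z) p0) ?AN)" using Om[OF p0] by simp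
      from wf_subst_leaf[OF this z] have "wf Dl rkD UNIV False (\<phi> q p0)" using zq by simp
      hence fD: "f \<in> Dl" using allS p0 by auto
      from earN qQ fD obtain s where sG: "s \<in> GT Sig rkS"
          and ns: "gq N q s \<noteq> None" "\<not> (\<exists>us. gq N q s = Some (Sym f us))"
        unfolding earliest_def by blast
      then obtain t' where gq: "gq N q s = Some t'" by auto
      have qt': "qsem N (\<lambda>_. undefined) (\<lambda>_ _. Bot) q s t'"
        using gq unfolding gq_def by (rule the_opt_SomeD) (rule qsem_det)
      obtain tN where gN: "gM N s = Some tN" using totN sG unfolding total_def by auto
      have mN: "msem N (\<lambda>_. undefined) (\<lambda>_ _. Bot) s tN"
        using gN unfolding gM_def by (rule the_opt_SomeD) (rule msem_det)
      have gMM: "gM M s = Some tN" using assms(7) sG gN unfolding equivalent_def by auto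
      have mM: "msem M (\<lambda>_. undefined) (\<lambda>_ _. Bot) s tN"
        using gMM unfolding gM_def by (rule the_opt_SomeD) (rule msem_det)
      from mN obtain \<sigma>N where sN: "\<forall>z\<in>leaves ?AN. qsem N (\<lambda>_. undefined) (\<lambda>_ _. Bot) (fst z) s (\<sigma>N z)"
          and tNe: "tN = subst \<sigma>N ?AN"
        unfolding msem_def by auto
      have "qsem N (\<lambda>_. undefined) (\<lambda>_ _. Bot) q s (\<sigma>N (q, 0))" using sN z zq by auto
      hence "\<sigma>N (q, 0) = t'" using qt' by (rule qsem_det)
      let ?p = "deltaE M (\<lambda>_. undefined) s"
      have pP: "?p \<in> P M" using deltaE_in[OF isM] sG unfolding GT_def by auto
      from mM obtain \<sigma>M where tMe: "tN = subst \<sigma>M (Ax M ?p)"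
        unfolding msem_def by auto
      define \<tau> where "\<tau> = (\<lambda>x :: 'qM \<times> 'p. \<sigma>M (fst x, 0))"
      have "subst \<tau> (Omega \<rho> (Ax M ?p)) = subst \<sigma>M (Ax M ?p)"
        unfolding Omega_def subst_subst \<tau>_def
      proof (intro subst_cong ballI)
        fix z assume zin: "z \<in> leaves (Ax M ?p)"
        have wfp: "wf Dl rkD (Q M \<times> {0}) False (Ax M ?p)" using wfM pP by blast
        have "z \<in> Q M \<times> {0}" by (rule wf_leaves[OF wfp zin])
        hence "snd z = 0" by auto
        thus "subst (\<lambda>x. \<sigma>M (fst x, 0)) (Leaf (fst z, \<rho> (fst z))) = \<sigma>M z"
          by (cases z) simp
      qed
      hence "subst (\<lambda>z. subst \<tau> (\<phi> (fst z) ?p)) ?AN = subst \<sigma>N ?AN"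
        using Om[OF pP] tMe tNe by (simp add: subst_subst)
      from subst_leaf_eq[OF this z] have "subst \<tau> (\<phi> q ?p) = t'"
        using zq \<open>\<sigma>N (q, 0) = t'\<close> by simp
      moreover obtain us where "\<phi> q ?p = Sym f us" using allS pP by blast
      ultimately show False using ns gq by auto
    qed
    show ?thesis using A B zq by simp
  qed
  have part1: "Phi ?AN = glb ((\<lambda>p. Omega \<rho> (Ax M p)) ` P M)"
  proof (rule sym, rule glb_eqI)
    show "\<forall>t\<in>(\<lambda>p. Omega \<rho> (Ax M p)) ` P M. below (Phi ?AN) t"
      using Om unfolding Phi_def by (auto simp: below_subst_Bot)
  next
    show "\<forall>g'. (\<forall>t\<in>(\<lambda>p. Omega \<rho> (Ax M p)) ` P M. below g' t) \<longrightarrow> below g' (Phi ?AN)"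
    proof (intro allI impI)
      fix g' assume h: "\<forall>t\<in>(\<lambda>p. Omega \<rho> (Ax M p)) ` P M. below g' t"
      hence hb: "\<forall>p\<in>P M. below g' (subst (\<lambda>z. \<phi> (fst z) p) ?AN)" using Om by auto
      show "below g' (Phi ?AN)" unfolding Phi_def
        apply (rule glb_core[where PP="P M" and \<sigma>="\<lambda>p z. \<phi> (fst z) p"])
        using PMne dis hb by auto
    qed
  qed
  show ?thesis using part1 part2 by blast
qed

end
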